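(* Let $\Delta$ be a local derivation of $\mathcal{S}$ with $\Delta(G_0)=0$. Then for every $m\in\mathbb{Z}\setminus\{0\}$ there exists $a_m\in\mathbb{C}$ such that $\Delta(G_m)=a_mG_m$.
   Context: $\mathcal{S}$ is the centerless super Virasoro algebra: the Lie superalgebra over $\mathbb{C}$ with basis $\{L_m,G_n: m,n\in\mathbb{Z}\}$, $L_m$ even, $G_n$ odd, and brackets $[L_m,L_n]=(m-n)L_{m+n}$, $[L_m,G_r]=(\frac m2-r)G_{m+r}$, $[G_r,G_s]=2L_{r+s}$. A homogeneous linear map $D$ of parity $|D|$ is a derivation if $D([x,y])=[D(x),y]+(-1)^{|D||x|}[x,D(y)]$ for homogeneous $x,y$; derivations are sums of even and odd ones. A linear map $\Delta:\mathcal{S}\to\mathcal{S}$ is a local derivation if for every $x$ there is a derivation $D_x$ with $\Delta(x)=D_x(x)$. *)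

theory Defs
  imports Complex_Main
begin

text \<open>Elements of the centerless super Virasoro algebra S are represented by pairs
 (f, g) of finitely supported coefficient functions: the element
 sum_m f m * L_m + sum_n g n * G_n.\<close>

type_synonym sva = "(int \<Rightarrow> complex) \<times> (int \<Rightarrow> complex)"

definition sv_carrier :: "sva set" where
  "sv_carrier = {(f, g). finite {n. f n \<noteq> 0} \<and> finite {n. g n \<noteq> 0}}"

definition sv_zero :: sva where "sv_zero = (\<lambda>_. 0, \<lambda>_. 0)"

definition sv_add :: "sva \<Rightarrow> sva \<Rightarrow> sva" where
  "sv_add x y = (\<lambda>k. fst x k + fst y k, \<lambda>k. snd x k + snd y k)"

definition sv_smult :: "complex \<Rightarrow> sva \<Rightarrow> sva" where
  "sv_smult c x = (\<lambda>k. c * fst x k, \<lambda>k. c * snd x k)"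

definition Lb :: "int \<Rightarrow> sva" where
  "Lb m = (\<lambda>k. if k = m then 1 else 0, \<lambda>_. 0)"

definition Gb :: "int \<Rightarrow> sva" where
  "Gb n = (\<lambda>_. 0, \<lambda>k. if k = n then 1 else 0)"

text \<open>Bilinear extension of the super bracket
  [L_m,L_n] = (m-n) L_{m+n}, [L_m,G_r] = (m/2 - r) G_{m+r},
  [G_r,L_m] = -(m/2 - r) G_{m+r}, [G_r,G_s] = 2 L_{r+s}.\<close>
definition sv_br :: "sva \<Rightarrow> sva \<Rightarrow> sva" where
  "sv_br x y =
    (\<lambda>k. (\<Sum>m\<in>{m. fst x m \<noteq> 0}. fst x m * fst y (k - m) * of_int (m - (k - m)))
        + 2 * (\<Sum>r\<in>{r. snd x r \<noteq> 0}. snd x r * snd y (k - r)),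
     \<lambda>k. (\<Sum>m\<in>{m. fst x m \<noteq> 0}. fst x m * snd y (k - m) * (of_int m / 2 - of_int (k - m)))
        - (\<Sum>r\<in>{r. snd x r \<noteq> 0}. snd x r * fst y (k - r) * (of_int (k - r) / 2 - of_int r)))"

definition sv_even :: "sva \<Rightarrow> bool" where "sv_even x \<longleftrightarrow> snd x = (\<lambda>_. 0)"
definition sv_odd :: "sva \<Rightarrow> bool" where "sv_odd x \<longleftrightarrow> fst x = (\<lambda>_. 0)"

definition sv_par :: "bool \<Rightarrow> sva \<Rightarrow> bool" where
  "sv_par p x \<longleftrightarrow> (if p then sv_odd x else sv_even x)"

definition sv_linear :: "(sva \<Rightarrow> sva) \<Rightarrow> bool" where
  "sv_linear D \<longleftrightarrow> (\<forall>x\<in>sv_carrier. D x \<in> sv_carrier) \<and>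
     (\<forall>x\<in>sv_carrier. \<forall>y\<in>sv_carrier. \<forall>c.
        D (sv_add (sv_smult c x) y) = sv_add (sv_smult c (D x)) (D y))"

definition sv_hom_derivation :: "bool \<Rightarrow> (sva \<Rightarrow> sva) \<Rightarrow> bool" where
  "sv_hom_derivation p D \<longleftrightarrow> sv_linear D \<and>
     (\<forall>q. \<forall>x\<in>sv_carrier. sv_par q x \<longrightarrow> sv_par (p \<noteq> q) (D x)) \<and>
     (\<forall>q1 q2. \<forall>x\<in>sv_carrier. \<forall>y\<in>sv_carrier. sv_par q1 x \<longrightarrow> sv_par q2 y \<longrightarrow>
        D (sv_br x y) = sv_add (sv_br (D x) y)
          (sv_smult (if p \<and> q1 then -1 else 1) (sv_br x (D y))))"

definition sv_derivation :: "(sva \<Rightarrow> sva) \<Rightarrow> bool" where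
  "sv_derivation D \<longleftrightarrow> (\<exists>D0 D1. sv_hom_derivation False D0 \<and> sv_hom_derivation True D1 \<and>
     (\<forall>x\<in>sv_carrier. D x = sv_add (D0 x) (D1 x)))"

definition sv_local_derivation :: "(sva \<Rightarrow> sva) \<Rightarrow> bool" where
  "sv_local_derivation \<Delta> \<longleftrightarrow> sv_linear \<Delta> \<and>
     (\<forall>x\<in>sv_carrier. \<exists>D. sv_derivation D \<and> \<Delta> x = D x)"

end

theory Submission
  imports Defs "HOL-Computational_Algebra.Polynomial"
begin

lemma supp_delta[simp]: "{k. (if k = n then (1::complex) else 0) \<noteq> 0} = {n}" by auto

lemma Gb_carrier[simp]: "Gb n \<in> sv_carrier" unfolding sv_carrier_def Gb_def by simp
lemma Lb_carrier[simp]: "Lb n \<in> sv_carrier" unfolding sv_carrier_def Lb_def by simp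
lemma Gb_odd[simp]: "sv_par True (Gb n)" unfolding sv_par_def sv_odd_def Gb_def by simp
lemma Lb_even[simp]: "sv_par False (Lb n)" unfolding sv_par_def sv_even_def Lb_def by simp

lemma carrier_add[simp]: "x \<in> sv_carrier \<Longrightarrow> y \<in> sv_carrier \<Longrightarrow> sv_add x y \<in> sv_carrier"
proof -
  assume a: "x \<in> sv_carrier" "y \<in> sv_carrier"
  have "{k. fst x k + fst y k \<noteq> 0} \<subseteq> {n. fst x n \<noteq> 0} \<union> {n. fst y n \<noteq> 0}" by auto
  moreover have "{k. snd x k + snd y k \<noteq> 0} \<subseteq> {n. snd x n \<noteq> 0} \<union> {n. snd y n \<noteq> 0}" by auto
  ultimately show ?thesis using a unfolding sv_carrier_def sv_add_def
    by (auto simp: case_prod_beta intro: finite_subset)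
qed

lemma carrier_smult[simp]: "x \<in> sv_carrier \<Longrightarrow> sv_smult c x \<in> sv_carrier"
proof -
  assume a: "x \<in> sv_carrier"
  have "{k. c * fst x k \<noteq> 0} \<subseteq> {n. fst x n \<noteq> 0}" by auto
  moreover have "{k. c * snd x k \<noteq> 0} \<subseteq> {n. snd x n \<noteq> 0}" by auto
  ultimately show ?thesis using a unfolding sv_carrier_def sv_smult_def
    by (auto simp: case_prod_beta intro: finite_subset)
qed

lemma sum_supp_delta:
  assumes fin: "finite {r. g r \<noteq> 0}" shows "(\<Sum>r\<in>{r::int. g r \<noteq> (0::complex)}. g r * (if k - r = n then 1 else 0) * c r) = g (k - n) * c (k - n)"
proof -
  have "(\<Sum>r\<in>{r. g r \<noteq> 0}. g r * (if k - r = n then 1 else 0) * c r)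
      = (\<Sum>r\<in>{r. g r \<noteq> 0}. if r = k - n then g r * c r else 0)"
  proof (rule sum.cong[OF refl])
    fix r show "g r * (if k - r = n then 1 else 0) * c r = (if r = k - n then g r * c r else 0)"
      by (cases "r = k - n") (auto simp: algebra_simps)
  qed
  also have "\<dots> = g (k - n) * c (k - n)"
    using fin by (auto simp: sum.delta)
  finally show ?thesis .
qed

lemma br_G_right: assumes xc: "x \<in> sv_carrier" shows "sv_br x (Gb n) =
   (\<lambda>k. 2 * snd x (k - n), \<lambda>k. fst x (k - n) * (of_int (k - n) / 2 - of_int n))"
proof -
  have 1: "(\<Sum>r\<in>{r. snd x r \<noteq> 0}. snd x r * (if k - r = n then 1 else 0)) = snd x (k - n)" for k
    using sum_supp_delta[of "snd x" k n "\<lambda>_. 1"] xc by (auto simp: sv_carrier_def)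
  have 2: "(\<Sum>m\<in>{m. fst x m \<noteq> 0}. fst x m * (if k - m = n then 1 else 0) *
          (of_int m / 2 - of_int (k - m))) = fst x (k - n) * (of_int (k - n) / 2 - of_int n)" for k
    using sum_supp_delta[of "fst x" k n "\<lambda>m. (of_int m / 2 - of_int (k - m))"] using xc by (auto simp: sv_carrier_def)
  show ?thesis unfolding sv_br_def Gb_def using 1 2 by simp
qed

lemma br_L_right: assumes xc: "x \<in> sv_carrier" shows "sv_br x (Lb n) =
   (\<lambda>k. fst x (k - n) * of_int ((k - n) - n), \<lambda>k. - (snd x (k - n) * (of_int n / 2 - of_int (k - n))))"
proof -
  have 1: "\<And>k. (\<Sum>r\<in>{r. snd x r \<noteq> 0}. snd x r * (if k - r = n then 1 else 0) * (of_int (k - r) / 2 - of_int r))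
      = snd x (k - n) * (of_int n / 2 - of_int (k - n))"
    subgoal for k using sum_supp_delta[of "snd x" k n "\<lambda>r. (of_int (k - r) / 2 - of_int r)"] using xc by (auto simp: sv_carrier_def)
    done
  have 2: "(\<Sum>m\<in>{m. fst x m \<noteq> 0}. fst x m * (if k - m = n then 1 else 0) *
          of_int (m - (k - m))) = fst x (k - n) * of_int ((k - n) - n)" for k
    using sum_supp_delta[of "fst x" k n "\<lambda>m. of_int (m - (k - m))"] using xc by (auto simp: sv_carrier_def)
  show ?thesis unfolding sv_br_def Lb_def using 1 2 by simp
qed

lemma br_G_left: "sv_br (Gb n) y =
   (\<lambda>k. 2 * snd y (k - n), \<lambda>k. - (fst y (k - n) * (of_int (k - n) / 2 - of_int n)))"
  unfolding sv_br_def Gb_def by simp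

lemma br_L_left: "sv_br (Lb n) y =
   (\<lambda>k. fst y (k - n) * of_int (n - (k - n)), \<lambda>k. snd y (k - n) * (of_int n / 2 - of_int (k - n)))"
  unfolding sv_br_def Lb_def by simp


lemma hom_lin: "sv_hom_derivation p D \<Longrightarrow> x \<in> sv_carrier \<Longrightarrow> y \<in> sv_carrier \<Longrightarrow>
  D (sv_add (sv_smult c x) y) = sv_add (sv_smult c (D x)) (D y)"
  unfolding sv_hom_derivation_def sv_linear_def by blast

lemma hom_carrier: "sv_hom_derivation p D \<Longrightarrow> x \<in> sv_carrier \<Longrightarrow> D x \<in> sv_carrier"
  unfolding sv_hom_derivation_def sv_linear_def by blast

lemma zero_carrier[simp]: "sv_zero \<in> sv_carrier" unfolding sv_zero_def sv_carrier_def by simp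

lemma hom_zero: assumes "sv_hom_derivation p D" shows "D sv_zero = sv_zero"
proof -
  have e: "sv_add (sv_smult 1 sv_zero) sv_zero = sv_zero" unfolding sv_add_def sv_smult_def sv_zero_def by simp
  have "D sv_zero = sv_add (sv_smult 1 (D sv_zero)) (D sv_zero)"
    using hom_lin[OF assms zero_carrier zero_carrier, of 1] e by simp
  then have "fst (D sv_zero) = (\<lambda>k. fst (D sv_zero) k + fst (D sv_zero) k)"
       "snd (D sv_zero) = (\<lambda>k. snd (D sv_zero) k + snd (D sv_zero) k)"
    unfolding sv_add_def sv_smult_def by (metis (no_types, lifting) fst_conv mult_1 ext snd_conv)+
  then have "fst (D sv_zero) = (\<lambda>_. 0)" "snd (D sv_zero) = (\<lambda>_. 0)"
    by (metis add_cancel_left_left)+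
  then show ?thesis unfolding sv_zero_def by (metis prod.collapse)
qed

lemma hom_smult: assumes "sv_hom_derivation p D" "x \<in> sv_carrier"
  shows "D (sv_smult c x) = sv_smult c (D x)"
proof -
  have e: "\<And>z. sv_add z sv_zero = z" unfolding sv_add_def sv_zero_def by simp
  show ?thesis using hom_lin[OF assms zero_carrier, of c] hom_zero[OF assms(1)] e by simp
qed

lemma hom_leib: "sv_hom_derivation p D \<Longrightarrow> x \<in> sv_carrier \<Longrightarrow> y \<in> sv_carrier \<Longrightarrow>
   sv_par q1 x \<Longrightarrow> sv_par q2 y \<Longrightarrow>
   D (sv_br x y) = sv_add (sv_br (D x) y) (sv_smult (if p \<and> q1 then -1 else 1) (sv_br x (D y)))"
  unfolding sv_hom_derivation_def by blast

lemma hom_par: "sv_hom_derivation p D \<Longrightarrow> x \<in> sv_carrier \<Longrightarrow> sv_par q x \<Longrightarrow> sv_par (p \<noteq> q) (D x)"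
  unfolding sv_hom_derivation_def by blast

lemma br_L0G: "sv_br (Lb 0) (Gb n) = sv_smult (- of_int n) (Gb n)"
  unfolding br_L_left by (auto simp: Gb_def sv_smult_def fun_eq_iff)
lemma br_GG: "sv_br (Gb r) (Gb s) = sv_smult 2 (Lb (r + s))"
  unfolding br_G_left by (auto simp: Gb_def Lb_def sv_smult_def fun_eq_iff)
lemma br_LG: "sv_br (Lb m) (Gb r) = sv_smult (of_int m / 2 - of_int r) (Gb (m + r))"
  unfolding br_L_left by (auto simp: Gb_def sv_smult_def fun_eq_iff)


lemma even_G:
  assumes hD: "sv_hom_derivation False D"
  shows "\<exists>a. finite {k. a k \<noteq> 0} \<and>
     (\<forall>n. D (Gb n) = (\<lambda>_. 0, \<lambda>k. a (k - n) * (of_int (k - n) / 2 - of_int n)))"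
proof -
  define f where "f = fst (D (Lb 0))"
  define g where "g n = snd (D (Gb n))" for n
  define \<beta> where "\<beta> n = fst (D (Lb n)) n" for n
  have DGf: "fst (D (Gb n)) = (\<lambda>_. 0)" for n
    using hom_par[OF hD Gb_carrier Gb_odd, of n] by (simp add: sv_par_def sv_odd_def)
  have DLs: "snd (D (Lb n)) = (\<lambda>_. 0)" for n
    using hom_par[OF hD Lb_carrier Lb_even, of n] by (simp add: sv_par_def sv_even_def)
  have finf: "finite {k. f k \<noteq> 0}"
    using hom_carrier[OF hD Lb_carrier, of 0] unfolding f_def sv_carrier_def by auto
  have E1: "- of_int n * g n k = f (k - n) * (of_int (k - n) / 2 - of_int n) - of_int k * g n k" for n k
  proof -
    have "D (sv_br (Lb 0) (Gb n)) = sv_add (sv_br (D (Lb 0)) (Gb n)) (sv_smult 1 (sv_br (Lb 0) (D (Gb n))))"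
      using hom_leib[OF hD Lb_carrier Gb_carrier Lb_even Gb_odd] by simp
    then have "snd (sv_smult (- of_int n) (D (Gb n))) k =
       snd (sv_add (sv_br (D (Lb 0)) (Gb n)) (sv_smult 1 (sv_br (Lb 0) (D (Gb n))))) k"
      unfolding br_L0G hom_smult[OF hD Gb_carrier] by simp
    then show ?thesis
      unfolding br_G_right[OF hom_carrier[OF hD Lb_carrier]] br_L_left
      by (simp add: sv_add_def sv_smult_def f_def g_def)
  qed
  have f0: "f 0 = 0" using E1[of 1 1] by simp
  have E2: "\<beta> (r + s) = g r r + g s s" for r s
  proof -
    have "D (sv_br (Gb r) (Gb s)) = sv_add (sv_br (D (Gb r)) (Gb s)) (sv_smult 1 (sv_br (Gb r) (D (Gb s))))"
      using hom_leib[OF hD Gb_carrier Gb_carrier Gb_odd Gb_odd] by simp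
    then have "fst (sv_smult 2 (D (Lb (r + s)))) (r + s) =
       fst (sv_add (sv_br (D (Gb r)) (Gb s)) (sv_smult 1 (sv_br (Gb r) (D (Gb s))))) (r + s)"
      unfolding br_GG hom_smult[OF hD Lb_carrier] by simp
    then have "2 * \<beta> (r + s) = 2 * (g r r + g s s)"
      unfolding br_G_right[OF hom_carrier[OF hD Gb_carrier]] br_G_left
      by (simp add: sv_add_def sv_smult_def \<beta>_def g_def)
    then show ?thesis by (subst (asm) mult_left_cancel) simp_all
  qed
  have E3: "g 1 1 = \<beta> 1 + g 0 0"
  proof -
    have "D (sv_br (Lb 1) (Gb 0)) = sv_add (sv_br (D (Lb 1)) (Gb 0)) (sv_smult 1 (sv_br (Lb 1) (D (Gb 0))))"
      using hom_leib[OF hD Lb_carrier Gb_carrier Lb_even Gb_odd] by simp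
    then have "snd (sv_smult (1/2) (D (Gb 1))) 1 =
       snd (sv_add (sv_br (D (Lb 1)) (Gb 0)) (sv_smult 1 (sv_br (Lb 1) (D (Gb 0))))) 1"
      unfolding br_LG hom_smult[OF hD Gb_carrier] by simp
    then show ?thesis
      unfolding br_G_right[OF hom_carrier[OF hD Lb_carrier]] br_L_left
      by (simp add: sv_add_def sv_smult_def \<beta>_def g_def)
  qed
  have g00: "g 0 0 = 0" using E2[of 1 0] E3 by simp
  have gstep: "g (n + 1) (n + 1) = g n n + g 1 1" for n
    using E2[of n 1] E2[of "n + 1" 0] g00 by simp
  have glin: "g n n = of_int n * g 1 1" for n
  proof (induction n rule: int_induct[where k = 0])
    case base then show ?case using g00 by simp
  next
    case (step1 i) then show ?case using gstep[of i] by (simp add: algebra_simps)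
  next
    case (step2 i) then show ?case using gstep[of "i - 1"] by (simp add: algebra_simps)
  qed
  define a where "a k = (if k = 0 then - g 1 1 else f k / of_int k)" for k
  have fina: "finite {k. a k \<noteq> 0}"
    by (rule finite_subset[of _ "insert 0 {k. f k \<noteq> 0}"]) (auto simp: a_def finf split: if_splits)
  have "D (Gb n) = (\<lambda>_. 0, \<lambda>k. a (k - n) * (of_int (k - n) / 2 - of_int n))" for n
  proof -
    have "g n k = a (k - n) * (of_int (k - n) / 2 - of_int n)" for k
    proof (cases "k = n")
      case True then show ?thesis using glin[of n] by (simp add: a_def)
    next
      case False
      then have kn: "(of_int (k - n) :: complex) \<noteq> 0" by simp
      have h: "of_int (k - n) * g n k = f (k - n) * (of_int (k - n) / 2 - of_int n)"
        using E1[of n k] by (simp add: algebra_simps)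
      have "g n k = (of_int (k - n) * g n k) / of_int (k - n)" using kn by simp
      also have "\<dots> = f (k - n) * (of_int (k - n) / 2 - of_int n) / of_int (k - n)" using h by simp
      also have "\<dots> = a (k - n) * (of_int (k - n) / 2 - of_int n)" using False by (simp add: a_def)
      finally show ?thesis .
    qed
    then have "snd (D (Gb n)) = (\<lambda>k. a (k - n) * (of_int (k - n) / 2 - of_int n))"
      unfolding g_def by (rule ext)
    then show ?thesis using DGf[of n] by (simp add: prod_eq_iff)
  qed
  then show ?thesis using fina by blast
qed


lemma odd_G:
  assumes hD: "sv_hom_derivation True D"
  shows "\<exists>b. finite {k. b k \<noteq> 0} \<and> (\<forall>n. D (Gb n) = (\<lambda>k. 2 * b (k - n), \<lambda>_. 0))"
proof -
  define f where "f = snd (D (Lb 0))"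
  define g where "g n = fst (D (Gb n))" for n
  define \<beta> where "\<beta> n = snd (D (Lb n)) n" for n
  have DGs: "snd (D (Gb n)) = (\<lambda>_. 0)" for n
    using hom_par[OF hD Gb_carrier Gb_odd, of n] by (simp add: sv_par_def sv_even_def)
  have finf: "finite {k. f k \<noteq> 0}"
    using hom_carrier[OF hD Lb_carrier, of 0] unfolding f_def sv_carrier_def by auto
  have E1: "- of_int n * g n k = 2 * f (k - n) - of_int k * g n k" for n k
  proof -
    have "D (sv_br (Lb 0) (Gb n)) = sv_add (sv_br (D (Lb 0)) (Gb n)) (sv_smult 1 (sv_br (Lb 0) (D (Gb n))))"
      using hom_leib[OF hD Lb_carrier Gb_carrier Lb_even Gb_odd] by simp
    then have "fst (sv_smult (- of_int n) (D (Gb n))) k =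
       fst (sv_add (sv_br (D (Lb 0)) (Gb n)) (sv_smult 1 (sv_br (Lb 0) (D (Gb n))))) k"
      unfolding br_L0G hom_smult[OF hD Gb_carrier] by simp
    then show ?thesis
      unfolding br_G_right[OF hom_carrier[OF hD Lb_carrier]] br_L_left
      by (simp add: sv_add_def sv_smult_def f_def g_def)
  qed
  have EB: "(of_int m / 2 - of_int r) * g (m + r) (m + r) = 2 * \<beta> m + g r r * of_int (m - r)" for m r
  proof -
    have "D (sv_br (Lb m) (Gb r)) = sv_add (sv_br (D (Lb m)) (Gb r)) (sv_smult 1 (sv_br (Lb m) (D (Gb r))))"
      using hom_leib[OF hD Lb_carrier Gb_carrier Lb_even Gb_odd] by simp
    then have "fst (sv_smult (of_int m / 2 - of_int r) (D (Gb (m + r)))) (m + r) =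
       fst (sv_add (sv_br (D (Lb m)) (Gb r)) (sv_smult 1 (sv_br (Lb m) (D (Gb r))))) (m + r)"
      unfolding br_LG hom_smult[OF hD Gb_carrier] by simp
    then show ?thesis
      unfolding br_G_right[OF hom_carrier[OF hD Lb_carrier]] br_L_left
      by (simp add: sv_add_def sv_smult_def \<beta>_def g_def)
  qed
  have EC: "2 * \<beta> (r + s) = g r r * (of_int r / 2 - of_int s) + g s s * (of_int s / 2 - of_int r)" for r s
  proof -
    have "D (sv_br (Gb r) (Gb s)) = sv_add (sv_br (D (Gb r)) (Gb s)) (sv_smult (-1) (sv_br (Gb r) (D (Gb s))))"
      using hom_leib[OF hD Gb_carrier Gb_carrier Gb_odd Gb_odd] by simp
    then have "snd (sv_smult 2 (D (Lb (r + s)))) (r + s) =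
       snd (sv_add (sv_br (D (Gb r)) (Gb s)) (sv_smult (-1) (sv_br (Gb r) (D (Gb s))))) (r + s)"
      unfolding br_GG hom_smult[OF hD Lb_carrier] by simp
    then show ?thesis
      unfolding br_G_right[OF hom_carrier[OF hD Gb_carrier]] br_G_left
      by (simp add: sv_add_def sv_smult_def \<beta>_def g_def)
  qed
  define c where "c = g 0 0"
  have b0: "\<beta> 0 = 0" using EB[of 0 1] by simp
  have Bm: "2 * \<beta> m = g m m * (of_int m / 2) - c * of_int m" for m
    using EC[of m 0] by (simp add: c_def)
  have key: "5 * c = g m m + 4 * g (- m) (- m)" if m0: "m \<noteq> 0" for m
  proof -
    have "(of_int m / 2 + of_int m) * c = 2 * \<beta> m + g (- m) (- m) * (2 * of_int m)"
      using EB[of m "- m"] by (simp add: c_def)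
    also have "\<dots> = g m m * (of_int m / 2) - c * of_int m + g (- m) (- m) * (2 * of_int m)"
      using Bm[of m] by simp
    finally have "of_int m * (5 * c) = of_int m * (g m m + 4 * g (- m) (- m))"
      by (simp add: algebra_simps)
    then show ?thesis using m0 by simp
  qed
  have gc: "g n n = c" for n
  proof (cases "n = 0")
    case True then show ?thesis by (simp add: c_def)
  next
    case False
    have e1: "5 * c = g n n + 4 * g (- n) (- n)" using key[OF False] .
    have e2: "5 * c = g (- n) (- n) + 4 * g n n" using key[of "- n"] False by simp
    have "3 * g n n = 3 * g (- n) (- n)" using e1 e2 by (simp add: algebra_simps)
    then have "g n n = g (- n) (- n)" by simp
    then show ?thesis using e1 by simp
  qed
  define b where "b k = (if k = 0 then c / 2 else f k / of_int k)" for k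
  have finb: "finite {k. b k \<noteq> 0}"
    by (rule finite_subset[of _ "insert 0 {k. f k \<noteq> 0}"]) (auto simp: b_def finf split: if_splits)
  have "D (Gb n) = (\<lambda>k. 2 * b (k - n), \<lambda>_. 0)" for n
  proof -
    have "g n k = 2 * b (k - n)" for k
    proof (cases "k = n")
      case True then show ?thesis using gc[of n] by (simp add: b_def)
    next
      case False
      then have kn: "(of_int (k - n) :: complex) \<noteq> 0" by simp
      have h: "of_int (k - n) * g n k = 2 * f (k - n)"
        using E1[of n k] by (simp add: algebra_simps)
      have "g n k = (of_int (k - n) * g n k) / of_int (k - n)" using kn by simp
      also have "\<dots> = 2 * f (k - n) / of_int (k - n)" using h by simp
      also have "\<dots> = 2 * b (k - n)" using False by (simp add: b_def)
      finally show ?thesis .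
    qed
    then have "fst (D (Gb n)) = (\<lambda>k. 2 * b (k - n))"
      unfolding g_def by (rule ext)
    then show ?thesis using DGs[of n] by (simp add: prod_eq_iff)
  qed
  then show ?thesis using finb by blast
qed


lemma der_G:
  assumes "sv_derivation D"
  shows "\<exists>a b. finite {k. a k \<noteq> 0} \<and> finite {k. b k \<noteq> 0} \<and>
     (\<forall>n. D (Gb n) = (\<lambda>k. 2 * b (k - n), \<lambda>k. a (k - n) * (of_int (k - n) / 2 - of_int n)))"
proof -
  obtain D0 D1 where h0: "sv_hom_derivation False D0" and h1: "sv_hom_derivation True D1"
    and hD: "\<forall>x\<in>sv_carrier. D x = sv_add (D0 x) (D1 x)"
    using assms unfolding sv_derivation_def by blast
  obtain a where a: "finite {k. a k \<noteq> 0}"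
    "\<forall>n. D0 (Gb n) = (\<lambda>_. 0, \<lambda>k. a (k - n) * (of_int (k - n) / 2 - of_int n))"
    using even_G[OF h0] by blast
  obtain b where b: "finite {k. b k \<noteq> 0}" "\<forall>n. D1 (Gb n) = (\<lambda>k. 2 * b (k - n), \<lambda>_. 0)"
    using odd_G[OF h1] by blast
  have "D (Gb n) = (\<lambda>k. 2 * b (k - n), \<lambda>k. a (k - n) * (of_int (k - n) / 2 - of_int n))" for n
    using hD a(2) b(2) by (simp add: sv_add_def)
  then show ?thesis using a(1) b(1) by blast
qed

lemma der_lin:
  assumes "sv_derivation D" "x \<in> sv_carrier" "y \<in> sv_carrier"
  shows "D (sv_add (sv_smult c x) y) = sv_add (sv_smult c (D x)) (D y)"
proof -
  obtain D0 D1 where h0: "sv_hom_derivation False D0" and h1: "sv_hom_derivation True D1"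
    and hD: "\<forall>x\<in>sv_carrier. D x = sv_add (D0 x) (D1 x)"
    using assms(1) unfolding sv_derivation_def by blast
  have "D (sv_add (sv_smult c x) y) = sv_add (D0 (sv_add (sv_smult c x) y)) (D1 (sv_add (sv_smult c x) y))"
    using hD assms by simp
  also have "\<dots> = sv_add (sv_add (sv_smult c (D0 x)) (D0 y)) (sv_add (sv_smult c (D1 x)) (D1 y))"
    using hom_lin[OF h0 assms(2,3)] hom_lin[OF h1 assms(2,3)] by simp
  also have "\<dots> = sv_add (sv_smult c (sv_add (D0 x) (D1 x))) (sv_add (D0 y) (D1 y))"
    by (simp add: sv_add_def sv_smult_def algebra_simps)
  also have "\<dots> = sv_add (sv_smult c (D x)) (D y)" using hD assms by simp
  finally show ?thesis .
qed

definition ev :: "(int \<Rightarrow> complex) \<Rightarrow> complex \<Rightarrow> complex" where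
  "ev f z = (\<Sum>j\<in>{j. f j \<noteq> 0}. f j * z powi j)"

lemma ev_superset: "finite A \<Longrightarrow> {j. f j \<noteq> 0} \<subseteq> A \<Longrightarrow> ev f z = (\<Sum>j\<in>A. f j * z powi j)"
  unfolding ev_def by (rule sum.mono_neutral_left) auto

lemma ev_lin:
  assumes "finite {j. f j \<noteq> 0}" "finite {j. g j \<noteq> 0}"
  shows "ev (\<lambda>j. c * f j + d * g j) z = c * ev f z + d * ev g z"
proof -
  let ?A = "{j. f j \<noteq> 0} \<union> {j. g j \<noteq> 0}"
  have fA: "finite ?A" using assms by simp
  have "ev (\<lambda>j. c * f j + d * g j) z = (\<Sum>j\<in>?A. (c * f j + d * g j) * z powi j)"
    by (rule ev_superset[OF fA]) auto
  also have "\<dots> = c * (\<Sum>j\<in>?A. f j * z powi j) + d * (\<Sum>j\<in>?A. g j * z powi j)"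
    by (simp add: sum.distrib sum_distrib_left algebra_simps)
  also have "\<dots> = c * ev f z + d * ev g z"
    using ev_superset[OF fA, of f z] ev_superset[OF fA, of g z] by auto
  finally show ?thesis .
qed

lemma ev_shift:
  assumes fin: "finite {j. f j \<noteq> 0}" and z: "z \<noteq> 0"
  shows "ev (\<lambda>j. f (j - n)) z = z powi n * ev f z"
proof -
  let ?S = "{j. f j \<noteq> 0}"
  have e: "{j. f (j - n) \<noteq> 0} = (\<lambda>k. k + n) ` ?S" proof (rule set_eqI, rule iffI)
    fix x assume "x \<in> {j. f (j - n) \<noteq> 0}"
    then show "x \<in> (\<lambda>k. k + n) ` ?S" by (intro image_eqI[of _ _ "x - n"]) auto
  qed auto
  have "ev (\<lambda>j. f (j - n)) z = (\<Sum>j\<in>(\<lambda>k. k + n) ` ?S. f (j - n) * z powi j)"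
    unfolding ev_def e ..
  also have "\<dots> = (\<Sum>k\<in>?S. f k * z powi (k + n))"
    by (subst sum.reindex) (auto simp: inj_on_def)
  also have "\<dots> = z powi n * ev f z"
    unfolding ev_def sum_distrib_left using z by (intro sum.cong) (auto simp: power_int_add)
  finally show ?thesis .
qed


lemma ev_vanish:
  assumes fin: "finite {j. f j \<noteq> 0}" and all: "\<And>z. z \<noteq> 0 \<Longrightarrow> ev f z = 0"
  shows "f j0 = 0"
proof (rule ccontr)
  assume j0: "f j0 \<noteq> 0"
  define S where "S = {j. f j \<noteq> 0}"
  have finS: "finite S" using fin by (simp add: S_def)
  define N where "N = (\<Sum>j\<in>S. nat \<bar>j\<bar>)"
  have bnd: "j \<in> S \<Longrightarrow> 0 \<le> j + int N" for j
  proof -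
    assume "j \<in> S"
    then have "nat \<bar>j\<bar> \<le> N" unfolding N_def by (rule member_le_sum[OF _ _ finS]) auto
    then show ?thesis by linarith
  qed
  define p where "p = (\<Sum>j\<in>S. monom (f j) (nat (j + int N)))"
  have pz: "poly p z = z ^ N * ev f z" if z: "z \<noteq> 0" for z
  proof -
    have "poly p z = (\<Sum>j\<in>S. f j * z ^ nat (j + int N))"
      unfolding p_def poly_sum poly_monom ..
    also have "\<dots> = (\<Sum>j\<in>S. f j * (z powi j * z ^ N))"
    proof (rule sum.cong[OF refl])
      fix j assume jS: "j \<in> S"
      have i: "int (nat (j + int N)) = j + int N" using bnd[OF jS] by simp
      have "z ^ nat (j + int N) = z powi (j + int N)" by (metis i power_int_of_nat)
      also have "\<dots> = z powi j * z ^ N" using z by (simp add: power_int_add)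
      finally show "f j * z ^ nat (j + int N) = f j * (z powi j * z ^ N)" by simp
    qed
    also have "\<dots> = z ^ N * ev f z"
      unfolding ev_def S_def sum_distrib_left by (intro sum.cong) auto
    finally show ?thesis .
  qed
  have p0: "p = 0"
  proof (rule ccontr)
    assume "p \<noteq> 0"
    then have "finite {x. poly p x = 0}" by (rule poly_roots_finite)
    moreover have "UNIV - {0} \<subseteq> {x. poly p x = 0}" using pz all by auto
    ultimately have "finite (UNIV - {0::complex})" by (rule finite_subset[rotated])
    then have "finite (UNIV :: complex set)" by simp
    then show False using infinite_UNIV_char_0 by blast
  qed
  have j0S: "j0 \<in> S" using j0 by (simp add: S_def)
  have "coeff p (nat (j0 + int N)) = (\<Sum>j\<in>S. if j = j0 then f j else 0)"
    unfolding p_def coeff_sum coeff_monom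
  proof (rule sum.cong[OF refl])
    fix j assume "j \<in> S"
    then have "(nat (j + int N) = nat (j0 + int N)) = (j = j0)" using bnd[of j] bnd[OF j0S] by auto
    then show "(if nat (j + int N) = nat (j0 + int N) then f j else 0) = (if j = j0 then f j else 0)" by simp
  qed
  also have "\<dots> = f j0" using finS j0S by simp
  finally show False using p0 j0 by simp
qed


lemma fin_shift: "finite {j. f j \<noteq> 0} \<Longrightarrow> finite {j::int. f (j - n) \<noteq> 0}"
proof -
  assume fin: "finite {j. f j \<noteq> 0}"
  have "{j. f (j - n) \<noteq> 0} \<subseteq> (\<lambda>k. k + n) ` {j. f j \<noteq> 0}"
  proof
    fix x assume "x \<in> {j. f (j - n) \<noteq> 0}"
    then show "x \<in> (\<lambda>k. k + n) ` {j. f j \<noteq> 0}" by (intro image_eqI[of _ _ "x - n"]) auto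
  qed
  then show ?thesis using finite_imageI[OF fin] by (rule finite_subset)
qed

lemma fin_mult: "finite {j. f j \<noteq> 0} \<Longrightarrow> finite {j. f j * c j \<noteq> (0::complex)}"
  by (rule finite_subset[rotated]) auto

lemma loc_lin: "sv_local_derivation \<Delta> \<Longrightarrow> x \<in> sv_carrier \<Longrightarrow> y \<in> sv_carrier \<Longrightarrow>
  \<Delta> (sv_add (sv_smult c x) y) = sv_add (sv_smult c (\<Delta> x)) (\<Delta> y)"
  unfolding sv_local_derivation_def sv_linear_def by blast

lemma loc_carrier: "sv_local_derivation \<Delta> \<Longrightarrow> x \<in> sv_carrier \<Longrightarrow> \<Delta> x \<in> sv_carrier"
  unfolding sv_local_derivation_def sv_linear_def by blast

lemma loc_der: "sv_local_derivation \<Delta> \<Longrightarrow> x \<in> sv_carrier \<Longrightarrow> \<exists>D. sv_derivation D \<and> \<Delta> x = D x"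
  unfolding sv_local_derivation_def by blast

lemma step1:
  assumes loc: "sv_local_derivation \<Delta>" and G0: "\<Delta> (Gb 0) = sv_zero" and n0: "n \<noteq> 0"
  shows "fst (\<Delta> (Gb n)) j = 0" "snd (\<Delta> (Gb n)) j \<noteq> 0 \<Longrightarrow> j = n \<or> j = 2 * n"
proof -
  define W where "W = \<Delta> (Gb n)"
  have Wc: "W \<in> sv_carrier" unfolding W_def by (rule loc_carrier[OF loc Gb_carrier])
  have finf: "finite {j. fst W j \<noteq> 0}" and fins: "finite {j. snd W j \<noteq> 0}"
    using Wc by (auto simp: sv_carrier_def)
  define g where "g j = snd W j * (of_int (j - n) * of_int (j - 2 * n))" for j
  have fing: "finite {j. g j \<noteq> 0}" unfolding g_def by (rule fin_mult[OF fins])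
  have ev0: "ev (fst W) z = 0 \<and> ev g z = 0" if z: "z \<noteq> 0" for z
  proof -
    define t where "t = - (z powi n)"
    define y where "y = sv_add (sv_smult t (Gb 0)) (Gb n)"
    have yc: "y \<in> sv_carrier" unfolding y_def by simp
    have "\<Delta> y = sv_add (sv_smult t (\<Delta> (Gb 0))) W"
      unfolding y_def W_def by (rule loc_lin[OF loc Gb_carrier Gb_carrier])
    then have Wy: "W = \<Delta> y" using G0 by (simp add: sv_add_def sv_smult_def sv_zero_def)
    obtain D where D: "sv_derivation D" "\<Delta> y = D y" using loc_der[OF loc yc] by blast
    obtain a b where ab: "finite {k. a k \<noteq> 0}" "finite {k. b k \<noteq> 0}"
      "\<And>n. D (Gb n) = (\<lambda>k. 2 * b (k - n), \<lambda>k. a (k - n) * (of_int (k - n) / 2 - of_int n))"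
      using der_G[OF D(1)] by blast
    have "W = sv_add (sv_smult t (D (Gb 0))) (D (Gb n))"
      using Wy D(2) der_lin[OF D(1) Gb_carrier Gb_carrier] unfolding y_def by simp
    then have Wf: "fst W j = t * (2 * b j) + 2 * b (j - n)"
      and Ws: "snd W j = t * (a j * (of_int j / 2)) + a (j - n) * (of_int (j - n) / 2 - of_int n)" for j
      unfolding ab(3) by (simp_all add: sv_add_def sv_smult_def)
    have "fst W = (\<lambda>j. 2 * b (j - n) + (2 * t) * b j)" using Wf by (auto simp: algebra_simps)
    then have "ev (fst W) z = 2 * ev (\<lambda>j. b (j - n)) z + (2 * t) * ev b z"
      using ev_lin[OF fin_shift[OF ab(2), of n] ab(2), of 2 "2 * t" z] by simp
    also have "\<dots> = 2 * (z powi n + t) * ev b z" using ev_shift[OF ab(2) z] by (simp add: algebra_simps)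
    also have "\<dots> = 0" by (simp add: t_def)
    finally have e1: "ev (fst W) z = 0" .
    define F where "F k = a k * (of_int k * of_int (k - n) * of_int (k - 2 * n))" for k
    have finF: "finite {k. F k \<noteq> 0}" unfolding F_def by (rule fin_mult[OF ab(1)])
    have "g = (\<lambda>j. (1/2) * F (j - n) + (t / 2) * F j)"
      unfolding g_def F_def Ws by (rule ext) (simp add: field_simps)
    then have "ev g z = (1/2) * ev (\<lambda>j. F (j - n)) z + (t / 2) * ev F z"
      using ev_lin[OF fin_shift[OF finF, of n] finF, of "1/2" "t/2" z] by simp
    also have "\<dots> = (1/2) * (z powi n + t) * ev F z" using ev_shift[OF finF z] by (simp add: algebra_simps)
    also have "\<dots> = 0" by (simp add: t_def)
    finally show ?thesis using e1 by simp
  qed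
  show "fst (\<Delta> (Gb n)) j = 0"
    using ev_vanish[OF finf, of j] ev0 unfolding W_def by blast
  assume "snd (\<Delta> (Gb n)) j \<noteq> 0"
  moreover have "g j = 0" using ev_vanish[OF fing, of j] ev0 by blast
  ultimately have "(of_int (j - n) * of_int (j - 2 * n) :: complex) = 0" unfolding g_def W_def by simp
  then have "j - n = 0 \<or> j - 2 * n = 0" by (simp only: mult_eq_0_iff of_int_eq_0_iff)
  then show "j = n \<or> j = 2 * n" by arith
qed


lemma ev_two:
  assumes "p \<noteq> q"
  shows "ev (\<lambda>j. if j = p then u else if j = q then v else 0) z = u * z powi p + v * z powi q"
proof -
  have "ev (\<lambda>j. if j = p then u else if j = q then v else 0) z =
     (\<Sum>j\<in>{p, q}. (if j = p then u else if j = q then v else 0) * z powi j)"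
    by (rule ev_superset) auto
  also have "\<dots> = u * z powi p + v * z powi q" using assms by simp
  finally show ?thesis .
qed

lemma step2:
  assumes loc: "sv_local_derivation \<Delta>" and G0: "\<Delta> (Gb 0) = sv_zero" and m0: "m \<noteq> 0"
  shows "snd (\<Delta> (Gb m)) (2 * m) = 0"
proof -
  define P where "P = snd (\<Delta> (Gb m))"
  define Q where "Q = snd (\<Delta> (Gb (- m)))"
  have Psupp: "P j \<noteq> 0 \<Longrightarrow> j = m \<or> j = 2 * m" for j using step1(2)[OF loc G0 m0] unfolding P_def by blast
  have Qsupp: "Q j \<noteq> 0 \<Longrightarrow> j = - m \<or> j = 2 * (- m)" for j using step1(2)[OF loc G0, of "- m"] m0 unfolding Q_def by simp
  define \<beta> where "\<beta> = P (2 * m)"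
  define \<beta>' where "\<beta>' = Q (- 2 * m)"
  have key: "\<beta> * z powi (2 * m) + (- \<beta>') * z powi 0 = 0" if z: "z \<noteq> 0" for z
  proof -
    define s where "s = - (z powi (2 * m))"
    define y where "y = sv_add (sv_smult s (Gb (- m))) (Gb m)"
    have yc: "y \<in> sv_carrier" unfolding y_def by simp
    have Dy: "\<Delta> y = sv_add (sv_smult s (\<Delta> (Gb (- m)))) (\<Delta> (Gb m))"
      unfolding y_def by (rule loc_lin[OF loc Gb_carrier Gb_carrier])
    obtain D where D: "sv_derivation D" "\<Delta> y = D y" using loc_der[OF loc yc] by blast
    obtain a b where ab: "finite {k. a k \<noteq> 0}" "finite {k. b k \<noteq> 0}"
      "\<And>n. D (Gb n) = (\<lambda>k. 2 * b (k - n), \<lambda>k. a (k - n) * (of_int (k - n) / 2 - of_int n))"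
      using der_G[OF D(1)] by blast
    have "sv_add (sv_smult s (\<Delta> (Gb (- m)))) (\<Delta> (Gb m)) = sv_add (sv_smult s (D (Gb (- m)))) (D (Gb m))"
      using Dy D(2) der_lin[OF D(1) Gb_carrier Gb_carrier] unfolding y_def by simp
    then have U: "s * Q j + P j = s * (a (j - - m) * (of_int (j - - m) / 2 - of_int (- m)))
         + a (j - m) * (of_int (j - m) / 2 - of_int m)" for j
      unfolding ab(3) P_def Q_def by (simp add: sv_add_def sv_smult_def prod_eq_iff fun_eq_iff)
    define h where "h j = (s * Q j + P j) * (of_int (j - m) * of_int (j + m))" for j
    define F where "F k = a k * (of_int k * of_int (k - 2 * m) * of_int (k + 2 * m))" for k
    have finF: "finite {k. F k \<noteq> 0}" unfolding F_def by (rule fin_mult[OF ab(1)])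
    have "h = (\<lambda>j. (s / 2) * F (j - - m) + (1 / 2) * F (j - m))"
      unfolding h_def F_def U by (rule ext) (simp add: field_simps)
    then have "ev h z = (s / 2) * ev (\<lambda>j. F (j - - m)) z + (1 / 2) * ev (\<lambda>j. F (j - m)) z"
      using ev_lin[OF fin_shift[OF finF, of "- m"] fin_shift[OF finF, of m], of "s/2" "1/2" z] by simp
    also have "\<dots> = (1 / 2) * (s * z powi (- m) + z powi m) * ev F z"
      using ev_shift[OF finF z, of "- m"] ev_shift[OF finF z, of m] by (simp add: algebra_simps)
    also have "s * z powi (- m) = - (z powi m)"
    proof -
      have "z powi (2 * m + - m) = z powi (2 * m) * z powi (- m)" using z by (rule power_int_add[OF disjI1])
      then have "z powi m = z powi (2 * m) * z powi (- m)" by simp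
      then show ?thesis unfolding s_def by simp
    qed
    finally have evh: "ev h z = 0" by simp
    have hsupp: "{j. h j \<noteq> 0} \<subseteq> {2 * m, - 2 * m}"
    proof
      fix j assume "j \<in> {j. h j \<noteq> 0}"
      then have h1: "s * Q j + P j \<noteq> 0" and h2: "j \<noteq> m" and h3: "j \<noteq> - m"
        unfolding h_def by auto
      then have "Q j \<noteq> 0 \<or> P j \<noteq> 0" by auto
      then show "j \<in> {2 * m, - 2 * m}" using Psupp[of j] Qsupp[of j] h2 h3 by auto
    qed
    have Q2: "Q (2 * m) = 0" using Qsupp[of "2 * m"] m0 by auto
    have P2: "P (- 2 * m) = 0" using Psupp[of "- 2 * m"] m0 by auto
    have ne: "2 * m \<noteq> - 2 * m" using m0 by simp
    have "ev h z = (\<Sum>j\<in>{2 * m, - 2 * m}. h j * z powi j)"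
      by (rule ev_superset[OF _ hsupp]) simp
    also have "\<dots> = h (2 * m) * z powi (2 * m) + h (- 2 * m) * z powi (- 2 * m)" using ne by simp
    also have "h (2 * m) = \<beta> * (3 * of_int m * of_int m)"
      unfolding h_def Q2 \<beta>_def by (simp add: algebra_simps)
    also have "h (- 2 * m) = s * \<beta>' * (3 * of_int m * of_int m)"
      unfolding h_def P2 \<beta>'_def by (simp add: algebra_simps)
    finally have evh2: "ev h z = \<beta> * (3 * of_int m * of_int m) * z powi (2 * m) +
       s * \<beta>' * (3 * of_int m * of_int m) * z powi (- 2 * m)" .
    have sz: "s * z powi (- 2 * m) = - 1"
    proof -
      have "z powi (2 * m + - 2 * m) = z powi (2 * m) * z powi (- 2 * m)" using z by (rule power_int_add[OF disjI1])
      then have "1 = z powi (2 * m) * z powi (- 2 * m)" by simp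
      then show ?thesis unfolding s_def by simp
    qed
    define c where "c = (3 * of_int m * of_int m :: complex)"
    have "s * \<beta>' * c * z powi (- 2 * m) = \<beta>' * c * (s * z powi (- 2 * m))" by (simp only: ac_simps)
    also have "\<dots> = - (\<beta>' * c)" unfolding sz by simp
    finally have e3: "s * \<beta>' * c * z powi (- 2 * m) = - (\<beta>' * c)" .
    have "0 = \<beta> * c * z powi (2 * m) + s * \<beta>' * c * z powi (- 2 * m)"
      using evh evh2 unfolding c_def by simp
    also have "\<dots> = c * (\<beta> * z powi (2 * m) - \<beta>')" unfolding e3 by (simp add: algebra_simps)
    finally have "c * (\<beta> * z powi (2 * m) - \<beta>') = 0" by simp
    then have "(3 * of_int m * of_int m) * (\<beta> * z powi (2 * m) - \<beta>') = 0" unfolding c_def .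
    then show ?thesis using m0 by simp
  qed
  define fz where "fz = (\<lambda>j. if j = 2 * m then \<beta> else if j = 0 then - \<beta>' else 0)"
  have "fz (2 * m) = 0"
  proof (rule ev_vanish)
    show "finite {j. fz j \<noteq> 0}"
      by (rule finite_subset[of _ "{2 * m, 0}"]) (auto simp: fz_def split: if_splits)
    fix z :: complex assume "z \<noteq> 0"
    then show "ev fz z = 0"
      using key ev_two[of "2 * m" 0 \<beta> "- \<beta>'" z] m0 unfolding fz_def by simp
  qed
  then show ?thesis by (simp add: fz_def \<beta>_def P_def)
qed

theorem lemma3p5:
  assumes "sv_local_derivation \<Delta>"
    and "\<Delta> (Gb 0) = sv_zero"
  shows "\<forall>m::int. m \<noteq> 0 \<longrightarrow> (\<exists>a::complex. \<Delta> (Gb m) = sv_smult a (Gb m))"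
proof (intro allI impI)
  fix m :: int assume m0: "m \<noteq> 0"
  have f: "fst (\<Delta> (Gb m)) j = 0" for j using step1(1)[OF assms m0] .
  have s: "snd (\<Delta> (Gb m)) j = 0" if "j \<noteq> m" for j
  proof (rule ccontr)
    assume "snd (\<Delta> (Gb m)) j \<noteq> 0"
    then have "j = 2 * m" using step1(2)[OF assms m0] that by blast
    then show False using step2[OF assms m0] \<open>snd (\<Delta> (Gb m)) j \<noteq> 0\<close> by simp
  qed
  show "\<exists>a::complex. \<Delta> (Gb m) = sv_smult a (Gb m)"
  proof (rule exI[of _ "snd (\<Delta> (Gb m)) m"])
    have g1: "fst (Gb m) = (\<lambda>_. 0)" and g2: "snd (Gb m) = (\<lambda>k. if k = m then 1 else 0)"
      unfolding Gb_def by simp_all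
    show "\<Delta> (Gb m) = sv_smult (snd (\<Delta> (Gb m)) m) (Gb m)"
      unfolding sv_smult_def g1 g2 prod_eq_iff fun_eq_iff using f s by auto
  qed
qed

end
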